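(* Let $n,m\ge1$, $\mu>0$, $\nu>-1$, $D_{n,m}(\mu)=\{(z,w)\in\mathbb{C}^n\times\mathbb{C}^m:\|w\|^2<e^{-\mu\|z\|^2}\}$ and $\Phi(z,w)=\nu\mu\|z\|^2-\ln\left(e^{-\mu\|z\|^2}-\|w\|^2\right)$. Then for all $(z,w)\in D_{n,m}(\mu)$, $$\det\left(\frac{\partial^2\Phi}{\partial Z_i\partial\bar Z_j}\right)(z,w)=\frac{\mu^n\left[\nu+(1-\|\tilde w\|^2)^{-1}\right]^n}{(1-\|\tilde w\|^2)^{m+1}}e^{m\mu\|z\|^2},$$ where $(Z_1,\dots,Z_{n+m})=(z,w)$ and $\tilde w:=e^{\frac{\mu}{2}\|z\|^2}w$.
   Context: $\|\cdot\|$ is the standard Hermitian norm; the determinant is of the $(n+m)\times(n+m)$ complex Hessian matrix. *)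

theory Defs
  imports "HOL-Analysis.Analysis"
begin

definition dir_deriv :: "(complex^'k \<Rightarrow> real) \<Rightarrow> complex^'k \<Rightarrow> complex^'k \<Rightarrow> real" where
  "dir_deriv f v Z = deriv (\<lambda>t::real. f (Z + t *\<^sub>R v)) 0"

text \<open>Complex Hessian entry d^2 f / (dZ_i d conj Z_j) via Wirtinger operators
  d/dZ = (d/dx - i d/dy)/2, d/d conj Z = (d/dx + i d/dy)/2, where Z_k = x_k + i y_k.\<close>
definition wirtinger_hess :: "(complex^'k \<Rightarrow> real) \<Rightarrow> complex^'k \<Rightarrow> 'k \<Rightarrow> 'k \<Rightarrow> complex" where
  "wirtinger_hess f Z i j =
    (let ex = (\<lambda>k. axis k (1::complex)); ey = (\<lambda>k. axis k \<i>);
         d = (\<lambda>u v. dir_deriv (\<lambda>Y. dir_deriv f v Y) u Z)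
     in (1/4) * (complex_of_real (d (ex i) (ex j) + d (ey i) (ey j))
                 + \<i> * complex_of_real (d (ex i) (ey j) - d (ey i) (ex j))))"

definition complex_hessian :: "(complex^'k \<Rightarrow> real) \<Rightarrow> complex^'k \<Rightarrow> complex^'k^'k" where
  "complex_hessian f Z = (\<chi> i j. wirtinger_hess f Z i j)"

definition zpart :: "complex^('n::finite + 'm::finite) \<Rightarrow> complex^'n" where
  "zpart Z = (\<chi> i. Z $ Inl i)"
definition wpart :: "complex^('n::finite + 'm::finite) \<Rightarrow> complex^'m" where
  "wpart Z = (\<chi> j. Z $ Inr j)"
definition joinZ :: "complex^'n \<Rightarrow> complex^'m \<Rightarrow> complex^('n::finite + 'm::finite)" where
  "joinZ z w = (\<chi> k. case k of Inl i \<Rightarrow> z $ i | Inr j \<Rightarrow> w $ j)"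

definition domD :: "real \<Rightarrow> ((complex^'n) \<times> (complex^'m)) set" where
  "domD \<mu> = {(z,w). (norm w)^2 < exp (- \<mu> * (norm z)^2)}"

definition PhiF :: "real \<Rightarrow> real \<Rightarrow> complex^('n::finite + 'm::finite) \<Rightarrow> real" where
  "PhiF \<mu> \<nu> Z = \<nu> * \<mu> * (norm (zpart Z))^2
      - ln (exp (- \<mu> * (norm (zpart Z))^2) - (norm (wpart Z))^2)"

end

theory Submission
  imports Defs
begin


lemma det_row_id:
  fixes A :: "'a::comm_ring_1^'k^'k"
  assumes h: "\<And>i j. i \<noteq> k \<Longrightarrow> A$i$j = (if i = j then 1 else 0)"
  shows "det A = A$k$k"
proof -
  have z: "(\<Prod>i\<in>UNIV. A$i$p i) = 0" if p: "p permutes UNIV" and ne: "p \<noteq> id" for p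
  proof -
    obtain i where i: "p i \<noteq> i" using ne by (metis eq_id_iff)
    have "\<exists>j. j \<noteq> k \<and> p j \<noteq> j"
    proof (cases "i = k")
      case True
      have "p (p k) \<noteq> p k" using i True p by (metis permutes_inj injD)
      then show ?thesis using i True by metis
    next
      case False then show ?thesis using i by blast
    qed
    then obtain j where "j \<noteq> k" "p j \<noteq> j" by blast
    then have "A$j$p j = 0" using h by simp
    then show ?thesis by (intro prod_zero) auto
  qed
  have fin: "finite {p. p permutes (UNIV::'k set)}" by (simp add: finite_permutations)
  have idin: "id \<in> {p. p permutes (UNIV::'k set)}" by (simp add: permutes_id)
  have "det A = of_int (sign (id::'k\<Rightarrow>'k)) * (\<Prod>i\<in>UNIV. A$i$id i)
     + (\<Sum>p\<in>{p. p permutes UNIV} - {id}. of_int (sign p) * (\<Prod>i\<in>UNIV. A$i$p i))"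
    unfolding det_def by (subst sum.remove[OF fin idin]) simp
  also have "(\<Sum>p\<in>{p. p permutes UNIV} - {id}. of_int (sign p) * (\<Prod>i\<in>UNIV. A$i$p i)) = 0"
    by (rule sum.neutral) (auto simp: z)
  also have "(\<Prod>i\<in>UNIV. A$i$id i) = A$k$k * (\<Prod>i\<in>UNIV-{k}. A$i$i)"
    by (subst prod.remove[of UNIV k]) auto
  also have "(\<Prod>i\<in>UNIV-{k}. A$i$i) = 1"
    by (rule prod.neutral) (auto simp: h)
  finally show ?thesis by (simp add: sign_id)
qed

lemma det_col_id:
  fixes A :: "'a::comm_ring_1^'k^'k"
  assumes h: "\<And>i j. j \<noteq> k \<Longrightarrow> A$i$j = (if i = j then 1 else 0)"
  shows "det A = A$k$k"
proof -
  have "det A = det (transpose A)" by simp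
  also have "\<dots> = transpose A $k$k"
    by (rule det_row_id) (auto simp: transpose_def h)
  finally show ?thesis by (simp add: transpose_def)
qed

lemma det_rank1:
  fixes u v :: "'a::field^'k"
  shows "det (\<chi> i j. (if i = j then 1 else 0) + u$i * v$j) = 1 + (\<Sum>i\<in>UNIV. v$i * u$i)"
proof (cases "u = 0")
  case True
  have "(\<chi> i j. (if i = j then 1 else 0) + u$i * v$j) = (mat 1 :: 'a^'k^'k)"
    using True by (simp add: mat_def vec_eq_iff)
  then show ?thesis using True by simp
next
  case False
  then obtain k where k: "u$k \<noteq> 0" by (metis vec_eq_iff zero_index)
  define A where "A = ((\<chi> i j. (if i = j then 1 else 0) + u$i * v$j) :: 'a^'k^'k)"
  define E where "E = ((\<chi> i j. if j = k then u$i else (if i = j then 1 else 0)) :: 'a^'k^'k)"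
  define w where "w = (\<chi> j. \<Sum>i\<in>UNIV. v$i * E$i$j)"
  define B where "B = ((\<chi> i j. (if i = j then 1 else 0) + (if i = k then w$j else 0)) :: 'a^'k^'k)"
  have "A ** E = E ** B"
  proof -
    have l: "(A ** E)$i$j = E$i$j + u$i * w$j" for i j
    proof -
      have "(A ** E)$i$j = (\<Sum>l\<in>UNIV. (if i = l then 1 else 0) * E$l$j) + (\<Sum>l\<in>UNIV. u$i * (v$l * E$l$j))"
        unfolding A_def matrix_matrix_mult_def by (simp add: distrib_right sum.distrib mult.assoc)
      also have "\<dots> = E$i$j + u$i * w$j"
      proof -
        have "(\<Sum>l\<in>UNIV. (if i = l then 1 else 0) * E$l$j) = (\<Sum>l\<in>UNIV. if i = l then E$l$j else 0)"
          by (rule sum.cong) auto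
        then show ?thesis by (simp add: w_def sum_distrib_left)
      qed
      finally show ?thesis .
    qed
    have r: "(E ** B)$i$j = E$i$j + u$i * w$j" for i j
    proof -
      have "(E ** B)$i$j = (\<Sum>l\<in>UNIV. E$i$l * (if l = j then 1 else 0)) + (\<Sum>l\<in>UNIV. E$i$l * (if l = k then w$j else 0))"
        unfolding B_def matrix_matrix_mult_def by (simp add: distrib_left sum.distrib)
      also have "\<dots> = E$i$j + E$i$k * w$j"
        by (simp add: if_distrib cong: if_cong)
      finally show ?thesis by (simp add: E_def)
    qed
    show ?thesis using l r by (simp add: vec_eq_iff)
  qed
  then have "det A * det E = det E * det B" by (simp add: det_mul[symmetric])
  moreover have "det E = u$k" by (subst det_col_id[where A=E and k=k]) (auto simp: E_def)
  moreover have "det B = 1 + w$k" by (subst det_row_id[where A=B and k=k]) (auto simp: B_def)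
  moreover have "w$k = (\<Sum>i\<in>UNIV. v$i * u$i)" by (simp add: w_def E_def)
  ultimately show ?thesis using k unfolding A_def by simp
qed

lemma sum_delta_mult: fixes f :: "'b::finite \<Rightarrow> 'a::comm_ring_1" shows "(\<Sum>l\<in>UNIV. (if i = l then 1 else 0) * f l) = (f i :: 'a::comm_ring_1)"
proof -
  have "(\<Sum>l\<in>UNIV. (if i = l then 1 else 0) * f l) = (\<Sum>l\<in>UNIV. if i = l then f l else 0)"
    by (rule sum.cong) auto
  then show ?thesis by simp
qed

lemma sum_delta_mult': fixes f :: "'b::finite \<Rightarrow> 'a::comm_ring_1" shows "(\<Sum>l\<in>UNIV. f l * (if l = j then 1 else 0)) = (f j :: 'a::comm_ring_1)"
proof -
  have "(\<Sum>l\<in>UNIV. f l * (if l = j then 1 else 0)) = (\<Sum>l\<in>UNIV. if j = l then f l else 0)"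
    by (rule sum.cong) auto
  then show ?thesis by simp
qed

lemma det_rank2:
  fixes u1 v1 u2 v2 :: "'a::field^'k"
  defines "d11 \<equiv> (\<Sum>i\<in>UNIV. v1$i * u1$i)" and "d12 \<equiv> (\<Sum>i\<in>UNIV. v1$i * u2$i)"
    and "d21 \<equiv> (\<Sum>i\<in>UNIV. v2$i * u1$i)" and "d22 \<equiv> (\<Sum>i\<in>UNIV. v2$i * u2$i)"
  assumes nz: "1 + d11 \<noteq> 0"
  shows "det (\<chi> i j. (if i = j then 1 else 0) + u1$i * v1$j + u2$i * v2$j)
     = (1 + d11) * (1 + d22) - d12 * d21"
proof -
  define c where "c = d12 / (1 + d11)"
  define u' where "u' = (\<chi> i. u2$i - c * u1$i)"
  have cs: "(\<Sum>l\<in>UNIV. v1$l * u'$l) = c"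
  proof -
    have "(\<Sum>l\<in>UNIV. v1$l * u'$l) = d12 - c * d11"
      by (simp add: u'_def d12_def d11_def right_diff_distrib sum_subtractf sum_distrib_left mult.left_commute)
    also have "\<dots> = c" using nz by (simp add: c_def field_simps)
    finally show ?thesis .
  qed
  have cs2: "(\<Sum>l\<in>UNIV. v2$l * u'$l) = d22 - c * d21"
    by (simp add: u'_def d22_def d21_def right_diff_distrib sum_subtractf sum_distrib_left mult.left_commute)
  have prod: "(\<chi> i j. (if i = j then 1 else 0) + u1$i * v1$j + u2$i * v2$j) =
     (\<chi> i j. (if i = j then 1 else 0) + u1$i * v1$j) ** (\<chi> i j. (if i = j then 1 else 0) + u'$i * v2$j)"
  proof -
    have "((\<chi> i j. (if i = j then 1 else 0) + u1$i * v1$j) ** (\<chi> i j. (if i = j then 1 else 0) + u'$i * v2$j))$i$j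
       = (\<Sum>l\<in>UNIV. (if i = l then 1 else 0) * (if l = j then 1 else 0))
         + (\<Sum>l\<in>UNIV. (if i = l then 1 else 0) * (u'$l * v2$j))
         + (\<Sum>l\<in>UNIV. (u1$i * v1$l) * (if l = j then 1 else 0))
         + u1$i * v2$j * (\<Sum>l\<in>UNIV. v1$l * u'$l)" for i j :: 'k
      unfolding matrix_matrix_mult_def
      by (simp add: distrib_left distrib_right sum.distrib sum_distrib_left mult_ac)
    also have "\<dots> i j = (if i = j then 1 else 0) + u'$i * v2$j + u1$i * v1$j + u1$i * v2$j * c" for i j
      by (simp only: sum_delta_mult sum_delta_mult' cs)
    also have "\<dots> i j = (if i = j then 1 else 0) + u1$i * v1$j + u2$i * v2$j" for i j
      by (simp add: u'_def algebra_simps)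
    finally show ?thesis by (simp add: vec_eq_iff)
  qed
  show ?thesis
    unfolding prod det_mul det_rank1 cs2 d11_def[symmetric]
    using nz by (simp add: c_def field_simps)
qed


definition Bz :: "complex^('n::finite+'m::finite) \<Rightarrow> complex^('n+'m) \<Rightarrow> real" where
  "Bz Y V = (\<Sum>i\<in>UNIV. Re (Y$Inl i) * Re (V$Inl i) + Im (Y$Inl i) * Im (V$Inl i))"
definition Bw :: "complex^('n::finite+'m::finite) \<Rightarrow> complex^('n+'m) \<Rightarrow> real" where
  "Bw Y V = (\<Sum>i\<in>UNIV. Re (Y$Inr i) * Re (V$Inr i) + Im (Y$Inr i) * Im (V$Inr i))"

lemma norm_sq_vec: "(norm (x::complex^'k))^2 = (\<Sum>i\<in>UNIV. Re (x$i) * Re (x$i) + Im (x$i) * Im (x$i))"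
proof -
  have h: "\<And>z. cmod z * cmod z = Re z * Re z + Im z * Im z" by (metis cmod_power2 power2_eq_square)
  show ?thesis unfolding norm_vec_def L2_set_def
    by (simp add: sum_nonneg h power2_eq_square)
qed

lemma normz: "(norm (zpart Y))^2 = Bz Y Y"
  by (simp add: norm_sq_vec zpart_def Bz_def)
lemma normw: "(norm (wpart Y))^2 = Bw Y Y"
  by (simp add: norm_sq_vec wpart_def Bw_def)

lemma Bz_add: "Bz (Y + t *\<^sub>R V) U = Bz Y U + t * Bz V U"
  by (simp add: Bz_def algebra_simps sum.distrib sum_distrib_left)
lemma Bz_add2: "Bz U (Y + t *\<^sub>R V) = Bz U Y + t * Bz U V"
  by (simp add: Bz_def algebra_simps sum.distrib sum_distrib_left)
lemma Bz_sym: "Bz U V = Bz V U"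
  by (simp add: Bz_def mult.commute)
lemma Bw_add: "Bw (Y + t *\<^sub>R V) U = Bw Y U + t * Bw V U"
  by (simp add: Bw_def algebra_simps sum.distrib sum_distrib_left)
lemma Bw_add2: "Bw U (Y + t *\<^sub>R V) = Bw U Y + t * Bw U V"
  by (simp add: Bw_def algebra_simps sum.distrib sum_distrib_left)
lemma Bw_sym: "Bw U V = Bw V U"
  by (simp add: Bw_def mult.commute)

lemma Bz_line: "Bz (Y + t *\<^sub>R V) (Y + t *\<^sub>R V) = Bz Y Y + 2 * t * Bz Y V + t^2 * Bz V V"
  by (simp add: Bz_add Bz_add2 Bz_sym[of V Y] algebra_simps power2_eq_square)
lemma Bw_line: "Bw (Y + t *\<^sub>R V) (Y + t *\<^sub>R V) = Bw Y Y + 2 * t * Bw Y V + t^2 * Bw V V"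
  by (simp add: Bw_add Bw_add2 Bw_sym[of V Y] algebra_simps power2_eq_square)

lemma PhiF_eq: "PhiF \<mu> \<nu> Y = \<nu> * \<mu> * Bz Y Y - ln (exp (- \<mu> * Bz Y Y) - Bw Y Y)"
  by (simp add: PhiF_def normz normw)

lemma dir1:
  assumes pos: "exp (- \<mu> * Bz Y Y) - Bw Y Y > 0"
  shows "dir_deriv (PhiF \<mu> \<nu>) V Y =
    (\<nu> * \<mu> + \<mu> * exp (- \<mu> * Bz Y Y) / (exp (- \<mu> * Bz Y Y) - Bw Y Y)) * (2 * Bz Y V)
    + (1 / (exp (- \<mu> * Bz Y Y) - Bw Y Y)) * (2 * Bw Y V)"
proof -
  let ?a = "Bz Y Y" and ?b = "Bz Y V" and ?c = "Bz V V"
  let ?a' = "Bw Y Y" and ?b' = "Bw Y V" and ?c' = "Bw V V"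
  have eq: "(\<lambda>t::real. PhiF \<mu> \<nu> (Y + t *\<^sub>R V)) =
     (\<lambda>t. \<nu> * \<mu> * (?a + 2 * t * ?b + t^2 * ?c)
        - ln (exp (- \<mu> * (?a + 2 * t * ?b + t^2 * ?c)) - (?a' + 2 * t * ?b' + t^2 * ?c')))"
    by (simp add: PhiF_eq Bz_line Bw_line)
  have "((\<lambda>t::real. \<nu> * \<mu> * (?a + 2 * t * ?b + t^2 * ?c)
        - ln (exp (- \<mu> * (?a + 2 * t * ?b + t^2 * ?c)) - (?a' + 2 * t * ?b' + t^2 * ?c')))
        has_real_derivative
      ((\<nu> * \<mu> + \<mu> * exp (- \<mu> * ?a) / (exp (- \<mu> * ?a) - ?a')) * (2 * ?b)
    + (1 / (exp (- \<mu> * ?a) - ?a')) * (2 * ?b'))) (at 0)"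
    apply (rule derivative_eq_intros refl | (use pos in simp; fail))+
    apply (simp add: add_divide_distrib diff_divide_distrib algebra_simps)
    done
  then show ?thesis unfolding dir_deriv_def eq by (rule DERIV_imp_deriv)
qed

lemma dir2:
  assumes pos: "exp (- \<mu> * Bz Z Z) - Bw Z Z > 0"
  defines "E \<equiv> exp (- \<mu> * Bz Z Z)" and "s \<equiv> exp (- \<mu> * Bz Z Z) - Bw Z Z"
  shows "dir_deriv (\<lambda>Y. dir_deriv (PhiF \<mu> \<nu>) V Y) U Z =
    (\<mu>^2 * E * Bw Z Z / s^2 * (2 * Bz Z U) + \<mu> * E / s^2 * (2 * Bw Z U)) * (2 * Bz Z V)
    + (\<nu> * \<mu> + \<mu> * E / s) * (2 * Bz U V)
    + (\<mu> * E / s^2 * (2 * Bz Z U) + 1 / s^2 * (2 * Bw Z U)) * (2 * Bw Z V)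
    + (1 / s) * (2 * Bw U V)"
proof -
  let ?a = "Bz Z Z" and ?b = "Bz Z U" and ?c = "Bz U U"
  let ?a' = "Bw Z Z" and ?b' = "Bw Z U" and ?c' = "Bw U U"
  let ?e = "Bz Z V" and ?f = "Bz U V" and ?e' = "Bw Z V" and ?f' = "Bw U V"
  define A where "A = (\<lambda>t::real. ?a + 2 * t * ?b + t^2 * ?c)"
  define A' where "A' = (\<lambda>t::real. ?a' + 2 * t * ?b' + t^2 * ?c')"
  define g where "g = (\<lambda>t. (\<nu> * \<mu> + \<mu> * exp (- \<mu> * A t) / (exp (- \<mu> * A t) - A' t)) * (2 * (?e + t * ?f))
    + (1 / (exp (- \<mu> * A t) - A' t)) * (2 * (?e' + t * ?f')))"
  have aeq: "Bw Z Z = E - s" by (simp add: E_def s_def)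
  have eE: "exp (- (\<mu> * Bz Z Z)) = E" by (simp add: E_def)
  have sp: "s \<noteq> 0" using pos by (simp add: s_def)
  have opn: "open {t. 0 < exp (- \<mu> * A t) - A' t}"
    unfolding A_def A'_def by (intro open_Collect_less continuous_intros)
  have "0 \<in> {t. 0 < exp (- \<mu> * A t) - A' t}" using pos by (simp add: A_def A'_def)
  from eventually_nhds_in_open[OF opn this]
  have ev: "eventually (\<lambda>t. dir_deriv (PhiF \<mu> \<nu>) V (Z + t *\<^sub>R U) = g t) (nhds 0)"
  proof (rule eventually_mono)
    fix t assume "t \<in> {t. 0 < exp (- \<mu> * A t) - A' t}"
    then have p: "0 < exp (- \<mu> * Bz (Z + t *\<^sub>R U) (Z + t *\<^sub>R U)) - Bw (Z + t *\<^sub>R U) (Z + t *\<^sub>R U)"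
      by (simp add: A_def A'_def Bz_line Bw_line)
    show "dir_deriv (PhiF \<mu> \<nu>) V (Z + t *\<^sub>R U) = g t"
      unfolding dir1[OF p] Bz_line Bw_line g_def A_def A'_def by (simp add: Bz_add Bw_add)
  qed
  have "(g has_real_derivative
    ((\<mu>^2 * E * Bw Z Z / s^2 * (2 * Bz Z U) + \<mu> * E / s^2 * (2 * Bw Z U)) * (2 * Bz Z V)
    + (\<nu> * \<mu> + \<mu> * E / s) * (2 * Bz U V)
    + (\<mu> * E / s^2 * (2 * Bz Z U) + 1 / s^2 * (2 * Bw Z U)) * (2 * Bw Z V)
    + (1 / s) * (2 * Bw U V))) (at 0)"
    unfolding g_def A_def A'_def
    apply (rule derivative_eq_intros refl | (use pos in simp; fail))+
    apply (simp add: eE)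
    apply (simp add: aeq)
    using sp by (simp add: field_simps power2_eq_square)
  then have "((\<lambda>t. dir_deriv (PhiF \<mu> \<nu>) V (Z + t *\<^sub>R U)) has_real_derivative
    ((\<mu>^2 * E * Bw Z Z / s^2 * (2 * Bz Z U) + \<mu> * E / s^2 * (2 * Bw Z U)) * (2 * Bz Z V)
    + (\<nu> * \<mu> + \<mu> * E / s) * (2 * Bz U V)
    + (\<mu> * E / s^2 * (2 * Bz Z U) + 1 / s^2 * (2 * Bw Z U)) * (2 * Bw Z V)
    + (1 / s) * (2 * Bw U V))) (at 0)"
    by (subst DERIV_cong_ev[OF refl ev refl])
  then show ?thesis unfolding dir_deriv_def by (rule DERIV_imp_deriv)
qed

lemma sum_ax:
  fixes Y :: "'k::finite \<Rightarrow> complex"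
  shows "(\<Sum>i\<in>UNIV. Re (Y i) * Re (if i = a then c else 0) + Im (Y i) * Im (if i = a then c else 0))
    = Re (Y a) * Re c + Im (Y a) * Im c"
proof -
  have "(\<Sum>i\<in>UNIV. Re (Y i) * Re (if i = a then c else 0) + Im (Y i) * Im (if i = a then c else 0))
    = (\<Sum>i\<in>UNIV. if i = a then Re (Y i) * Re c + Im (Y i) * Im c else 0)"
    by (rule sum.cong) auto
  then show ?thesis by simp
qed

lemma Bz_ax1: "Bz Y (axis k 1) = (if isl k then Re (Y$k) else 0)"
  by (cases k) (simp_all add: Bz_def axis_def sum_ax)
lemma Bz_axi: "Bz Y (axis k \<i>) = (if isl k then Im (Y$k) else 0)"
  by (cases k) (simp_all add: Bz_def axis_def sum_ax)
lemma Bw_ax1: "Bw Y (axis k 1) = (if isl k then 0 else Re (Y$k))"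
  by (cases k) (simp_all add: Bw_def axis_def sum_ax)
lemma Bw_axi: "Bw Y (axis k \<i>) = (if isl k then 0 else Im (Y$k))"
  by (cases k) (simp_all add: Bw_def axis_def sum_ax)

lemma hess_entry:
  assumes pos: "exp (- \<mu> * Bz Z Z) - Bw Z Z > 0"
  defines "E \<equiv> exp (- \<mu> * Bz Z Z)" and "s \<equiv> exp (- \<mu> * Bz Z Z) - Bw Z Z"
  shows "wirtinger_hess (PhiF \<mu> \<nu>) Z i j =
    (if i = j then (if isl i then complex_of_real (\<nu> * \<mu> + \<mu> * E / s) else complex_of_real (1 / s)) else 0)
    + cnj (Z$i) * Z$j * complex_of_real
       (if isl i \<and> isl j then \<mu>^2 * E * Bw Z Z / s^2
        else if \<not> isl i \<and> \<not> isl j then 1 / s^2 else \<mu> * E / s^2)"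
  unfolding wirtinger_hess_def Let_def dir2[OF pos, folded E_def s_def]
  apply (simp add: Bz_ax1 Bz_axi Bw_ax1 Bw_axi)
  apply (simp add: axis_def)
  apply (cases "isl i"; cases "isl j")
  apply (auto simp: complex_eq_iff algebra_simps add_divide_distrib diff_divide_distrib)
  done


lemma sum_delta_c: fixes f :: "'b::finite \<Rightarrow> 'a::comm_ring_1"
  shows "(\<Sum>l\<in>UNIV. (if i = l then c else 0) * f l) = c * f i"
proof -
  have "(\<Sum>l\<in>UNIV. (if i = l then c else 0) * f l) = (\<Sum>l\<in>UNIV. if i = l then c * f l else 0)"
    by (rule sum.cong) auto
  then show ?thesis by simp
qed

lemma sum_Plus_UNIV: fixes f :: "('a::finite + 'b::finite) \<Rightarrow> 'c::comm_monoid_add"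
  shows "(\<Sum>i\<in>UNIV. f i) = (\<Sum>a\<in>UNIV. f (Inl a)) + (\<Sum>b\<in>UNIV. f (Inr b))"
  by (subst UNIV_Plus_UNIV[symmetric], subst sum.Plus) (auto simp: comp_def)

lemma prod_Plus_UNIV: fixes f :: "('a::finite + 'b::finite) \<Rightarrow> 'c::comm_monoid_mult"
  shows "(\<Prod>i\<in>UNIV. f i) = (\<Prod>a\<in>UNIV. f (Inl a)) * (\<Prod>b\<in>UNIV. f (Inr b))"
  by (subst UNIV_Plus_UNIV[symmetric], subst prod.Plus) (auto simp: comp_def)

lemma sumBz: "(\<Sum>a\<in>UNIV. Z$Inl a * cnj (Z$Inl a)) = complex_of_real (Bz Z Z)"
  by (simp add: Bz_def complex_mult_cnj power2_eq_square)
lemma sumBw: "(\<Sum>a\<in>UNIV. Z$Inr a * cnj (Z$Inr a)) = complex_of_real (Bw Z Z)"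
  by (simp add: Bw_def complex_mult_cnj power2_eq_square)

lemma Bz_nonneg: "Bz Z Z \<ge> 0" by (simp add: Bz_def sum_nonneg)
lemma Bw_nonneg: "Bw Z Z \<ge> 0" by (simp add: Bw_def sum_nonneg)

lemma zpart_join: "zpart (joinZ z w) = z" by (simp add: zpart_def joinZ_def vec_eq_iff)
lemma wpart_join: "wpart (joinZ z w) = w" by (simp add: wpart_def joinZ_def vec_eq_iff)

theorem lemma2p3:
  fixes \<mu> \<nu> :: real and z :: "complex^'n::finite" and w :: "complex^'m::finite"
  assumes "\<mu> > 0" and "\<nu> > -1" and "(z, w) \<in> domD \<mu>"
  shows "det (complex_hessian (PhiF \<mu> \<nu> :: complex^('n + 'm) \<Rightarrow> real) (joinZ z w)) =
    complex_of_real
      (let wt = exp (\<mu> / 2 * (norm z)^2) *\<^sub>R w in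
       \<mu> ^ CARD('n) * (\<nu> + 1 / (1 - (norm wt)^2)) ^ CARD('n)
         / (1 - (norm wt)^2) ^ (CARD('m) + 1) * exp (real CARD('m) * \<mu> * (norm z)^2))"
proof -
  define Z where "Z = (joinZ z w :: complex^('n+'m))"
  have PZ: "Bz Z Z = (norm z)^2" using normz[of Z] by (simp add: Z_def zpart_join)
  have QZ: "Bw Z Z = (norm w)^2" using normw[of Z] by (simp add: Z_def wpart_join)
  have pos: "exp (- \<mu> * Bz Z Z) - Bw Z Z > 0" using assms(3) by (simp add: domD_def PZ QZ)
  define E where "E = exp (- \<mu> * Bz Z Z)"
  define s where "s = E - Bw Z Z"
  define Gp where "Gp = \<nu> * \<mu> + \<mu> * E / s"
  define Gq where "Gq = 1 / s"
  define Gpp where "Gpp = \<mu>^2 * E * Bw Z Z / s^2"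
  define Gpq where "Gpq = \<mu> * E / s^2"
  define Gqq where "Gqq = 1 / s^2"
  have sp: "s > 0" using pos by (simp add: s_def E_def)
  have Ep: "E > 0" by (simp add: E_def)
  have Es: "E \<ge> s" using Bw_nonneg[of Z] by (simp add: s_def E_def)
  have Gpp_nn: "Gpp \<ge> 0" using Ep sp Bw_nonneg[of Z] by (simp add: Gpp_def)
  have Gp_pos: "Gp > 0"
  proof -
    have "E / s \<ge> 1" using Es sp by simp
    then have "\<nu> + E / s > 0" using assms(2) by linarith
    then have "\<mu> * (\<nu> + E / s) > 0" using assms(1) by simp
    then show ?thesis by (simp add: Gp_def algebra_simps)
  qed
  define g where "g = (\<lambda>i::'n+'m. if isl i then Gp else Gq)"
  define D where "D = ((\<chi> i j. if i = j then complex_of_real (g i) else 0) :: complex^('n+'m)^('n+'m))"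
  define u1 where "u1 = ((\<chi> i. if isl i then cnj (Z$i) / complex_of_real Gp else 0) :: complex^('n+'m))"
  define u2 where "u2 = ((\<chi> i. if isl i then 0 else cnj (Z$i) / complex_of_real Gq) :: complex^('n+'m))"
  define v1 where "v1 = ((\<chi> i. Z$i * complex_of_real (if isl i then Gpp else Gpq)) :: complex^('n+'m))"
  define v2 where "v2 = ((\<chi> i. Z$i * complex_of_real (if isl i then Gpq else Gqq)) :: complex^('n+'m))"
  define N where "N = ((\<chi> i j. (if i = j then 1 else 0) + u1$i * v1$j + u2$i * v2$j) :: complex^('n+'m)^('n+'m))"
  have H: "complex_hessian (PhiF \<mu> \<nu>) Z = D ** N"
  proof -
    have "(D ** N)$i$j = complex_of_real (g i) * N$i$j" for i j
      unfolding matrix_matrix_mult_def D_def by (simp add: sum_delta_c)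
    also have "\<dots> i j = wirtinger_hess (PhiF \<mu> \<nu>) Z i j" for i j
    proof -
      have a: "complex_of_real Gp \<noteq> 0" "complex_of_real Gq \<noteq> 0" using Gp_pos sp by (auto simp: Gq_def)
      show ?thesis
      unfolding hess_entry[OF pos] E_def[symmetric] s_def[symmetric]
        Gp_def[symmetric] Gq_def[symmetric] Gpp_def[symmetric] Gpq_def[symmetric] Gqq_def[symmetric]
      using a
      by (cases "isl i"; cases "isl j")
         (auto simp: N_def u1_def u2_def v1_def v2_def g_def field_simps)
    qed
    finally show ?thesis by (simp add: complex_hessian_def vec_eq_iff)
  qed
  have detD: "det D = complex_of_real (Gp ^ CARD('n) * Gq ^ CARD('m))"
    by (subst det_diagonal) (auto simp: D_def prod_Plus_UNIV g_def)
  have d11: "(\<Sum>i\<in>UNIV. v1$i * u1$i) = complex_of_real (Gpp * Bz Z Z / Gp)"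
  proof -
    have "(\<Sum>i\<in>UNIV. v1$i * u1$i) = (\<Sum>a\<in>UNIV. complex_of_real (Gpp / Gp) * (Z$Inl a * cnj (Z$Inl a)))"
      by (simp add: sum_Plus_UNIV v1_def u1_def mult_ac)
    also have "\<dots> = complex_of_real (Gpp * Bz Z Z / Gp)"
      unfolding sum_distrib_left[symmetric] sumBz by simp
    finally show ?thesis .
  qed
  have d12: "(\<Sum>i\<in>UNIV. v1$i * u2$i) = complex_of_real (Gpq * Bw Z Z / Gq)"
  proof -
    have "(\<Sum>i\<in>UNIV. v1$i * u2$i) = (\<Sum>a\<in>UNIV. complex_of_real (Gpq / Gq) * (Z$Inr a * cnj (Z$Inr a)))"
      by (simp add: sum_Plus_UNIV v1_def u2_def mult_ac)
    also have "\<dots> = complex_of_real (Gpq * Bw Z Z / Gq)"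
      unfolding sum_distrib_left[symmetric] sumBw by simp
    finally show ?thesis .
  qed
  have d21: "(\<Sum>i\<in>UNIV. v2$i * u1$i) = complex_of_real (Gpq * Bz Z Z / Gp)"
  proof -
    have "(\<Sum>i\<in>UNIV. v2$i * u1$i) = (\<Sum>a\<in>UNIV. complex_of_real (Gpq / Gp) * (Z$Inl a * cnj (Z$Inl a)))"
      by (simp add: sum_Plus_UNIV v2_def u1_def mult_ac)
    also have "\<dots> = complex_of_real (Gpq * Bz Z Z / Gp)"
      unfolding sum_distrib_left[symmetric] sumBz by simp
    finally show ?thesis .
  qed
  have d22: "(\<Sum>i\<in>UNIV. v2$i * u2$i) = complex_of_real (Gqq * Bw Z Z / Gq)"
  proof -
    have "(\<Sum>i\<in>UNIV. v2$i * u2$i) = (\<Sum>a\<in>UNIV. complex_of_real (Gqq / Gq) * (Z$Inr a * cnj (Z$Inr a)))"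
      by (simp add: sum_Plus_UNIV v2_def u2_def mult_ac)
    also have "\<dots> = complex_of_real (Gqq * Bw Z Z / Gq)"
      unfolding sum_distrib_left[symmetric] sumBw by simp
    finally show ?thesis .
  qed
  have nz: "1 + (\<Sum>i\<in>UNIV. v1$i * u1$i) \<noteq> 0"
  proof -
    have "Gpp * Bz Z Z / Gp \<ge> 0" using Gpp_nn Bz_nonneg[of Z] Gp_pos by simp
    then show ?thesis unfolding d11
      by (metis add_nonneg_eq_0_iff of_real_1 of_real_add of_real_eq_0_iff zero_less_one_class.zero_le_one one_neq_zero)
  qed
  have detN: "det N = complex_of_real ((1 + Gpp * Bz Z Z / Gp) * (1 + Gqq * Bw Z Z / Gq)
      - (Gpq * Bw Z Z / Gq) * (Gpq * Bz Z Z / Gp))"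
    unfolding N_def det_rank2[OF nz] d11 d12 d21 d22 by simp
  have Q: "Bw Z Z = E - s" by (simp add: s_def)
  have X: "(1 + Gpp * Bz Z Z / Gp) * (1 + Gqq * Bw Z Z / Gq)
      - (Gpq * Bw Z Z / Gq) * (Gpq * Bz Z Z / Gp) = E / s"
    using sp Gp_pos unfolding Gpp_def Gqq_def Gpq_def Gq_def Q
    by (simp add: field_simps power2_eq_square)
  have lhs: "det (complex_hessian (PhiF \<mu> \<nu> :: complex^('n + 'm) \<Rightarrow> real) (joinZ z w))
     = complex_of_real (Gp ^ CARD('n) * (1/s) ^ CARD('m) * (E / s))"
    unfolding Z_def[symmetric] H det_mul detD detN X by (simp add: Gq_def)
  have nwt: "(norm (exp (\<mu> / 2 * (norm z)^2) *\<^sub>R w))^2 = (1 / E) * Bw Z Z"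
  proof -
    have "(exp (\<mu> / 2 * (norm z)^2))^2 = exp (\<mu> * (norm z)^2)"
      by (simp add: power2_eq_square exp_add[symmetric])
    also have "\<dots> = 1 / E" by (simp add: E_def PZ exp_minus field_simps)
    finally show ?thesis by (simp add: QZ power_mult_distrib)
  qed
  have one: "1 - (1 / E) * Bw Z Z = s / E" using Ep by (simp add: Q field_simps)
  have ex: "exp (real CARD('m) * \<mu> * (norm z)^2) = (1 / E) ^ CARD('m)"
  proof -
    have "exp (real CARD('m) * \<mu> * (norm z)^2) = exp (\<mu> * (norm z)^2) ^ CARD('m)"
      by (simp add: exp_of_nat_mult[symmetric] mult.assoc)
    also have "exp (\<mu> * (norm z)^2) = 1 / E" by (simp add: E_def PZ exp_minus field_simps)
    finally show ?thesis .
  qed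
  have Gp2: "\<mu> ^ CARD('n) * (\<nu> + 1 / (s / E)) ^ CARD('n) = Gp ^ CARD('n)"
    by (simp add: Gp_def power_mult_distrib[symmetric] algebra_simps)
  show ?thesis unfolding lhs Let_def nwt one ex
    using Ep sp
    by (simp add: Gp2[symmetric] field_simps power_divide)
qed

end
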